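(* Let $R$ be as in the standing setup. Then $a_j\ge b_j$ for all $j=0,\ldots,e-1$.
   Context: Standing setup: $k$ is a field and $R$ is a complete local domain with $k\subseteq R\subseteq k[[t]]$, residue field $k$, maximal ideal $m$, and nonzero conductor $(R:k[[t]])\neq 0$. Let $v$ be the $t$-adic valuation, $S=v(R)=\{v(r): r\in R, r\neq 0\}$, $e$ the smallest positive element of $S$, and $w_j$ the smallest element of $S$ congruent to $j\pmod e$. For a nonzero ideal $I$, $v(I)=\{v(a): a\in I, a\ne0\}$; $m^0=R$. Set $b_j=\max\{i: w_j\in v(m^i)\}$. Let $R'=\bigcup_{n\ge0}(m^n:m^n)$ be the blowup (first neighborhood ring) of $R$, a subring of $k[[t]]$; let $w'_j$ be the smallest element of $v(R')$ congruent to $j\pmod e$, and define $a_j$ by $w'_j=w_j-a_je$. *)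

theory Defs
  imports "HOL-Computational_Algebra.Formal_Power_Series"
begin

text \<open>Setting: k is a field (type 'a), k[[t]] is 'a fps, the t-adic valuation
  v is subdegree.  R is represented as a set of formal power series.\<close>

definition is_subring_fps :: "'a::field fps set \<Rightarrow> bool" where
  "is_subring_fps R \<longleftrightarrow> 0 \<in> R \<and> 1 \<in> R \<and>
     (\<forall>x\<in>R. \<forall>y\<in>R. x + y \<in> R \<and> x - y \<in> R \<and> x * y \<in> R)"

definition contains_constants :: "'a::field fps set \<Rightarrow> bool" where
  "contains_constants R \<longleftrightarrow> (\<forall>c. fps_const c \<in> R)"

text \<open>Non-units of R; R is local iff this set is an ideal (the maximal ideal m).\<close>
definition max_ideal :: "'a::field fps set \<Rightarrow> 'a fps set" where
  "max_ideal R = {r \<in> R. \<not> (\<exists>s\<in>R. r * s = 1)}"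

definition is_ideal_of :: "'a::field fps set \<Rightarrow> 'a fps set \<Rightarrow> bool" where
  "is_ideal_of I R \<longleftrightarrow> I \<subseteq> R \<and> 0 \<in> I \<and>
     (\<forall>x\<in>I. \<forall>y\<in>I. x + y \<in> I) \<and> (\<forall>x\<in>I. \<forall>r\<in>R. r * x \<in> I)"

definition is_local :: "'a::field fps set \<Rightarrow> bool" where
  "is_local R \<longleftrightarrow> is_ideal_of (max_ideal R) R \<and> max_ideal R \<noteq> R"

text \<open>Residue field R/m equals k: every element is a constant modulo m.\<close>
definition residue_field_is_k :: "'a::field fps set \<Rightarrow> bool" where
  "residue_field_is_k R \<longleftrightarrow> (\<forall>r\<in>R. \<exists>c. r - fps_const c \<in> max_ideal R)"

definition ideal_prod :: "'a::field fps set \<Rightarrow> 'a fps set \<Rightarrow> 'a fps set" where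
  "ideal_prod A B = {x. \<exists>(n::nat) f g. x = (\<Sum>l<n. f l * g l) \<and> (\<forall>l<n. f l \<in> A \<and> g l \<in> B)}"

fun ideal_pow :: "'a::field fps set \<Rightarrow> 'a fps set \<Rightarrow> nat \<Rightarrow> 'a fps set" where
  "ideal_pow R m 0 = R"
| "ideal_pow R m (Suc n) = ideal_prod m (ideal_pow R m n)"

definition madic_complete :: "'a::field fps set \<Rightarrow> bool" where
  "madic_complete R \<longleftrightarrow>
     (\<forall>s::nat \<Rightarrow> 'a fps. (\<forall>p. s p \<in> R) \<longrightarrow>
        (\<forall>N. \<exists>M. \<forall>p\<ge>M. \<forall>q\<ge>M. s p - s q \<in> ideal_pow R (max_ideal R) N) \<longrightarrow>
        (\<exists>L\<in>R. \<forall>N. \<exists>M. \<forall>p\<ge>M. s p - L \<in> ideal_pow R (max_ideal R) N))"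

definition conductor :: "'a::field fps set \<Rightarrow> 'a fps set" where
  "conductor R = {x \<in> R. \<forall>y. x * y \<in> R}"

definition val_set :: "'a::field fps set \<Rightarrow> nat set" where
  "val_set I = subdegree ` (I - {0})"

definition colon :: "'a::field fps set \<Rightarrow> 'a fps set \<Rightarrow> 'a fps set" where
  "colon A B = {x. \<forall>y\<in>B. x * y \<in> A}"

definition blowup :: "'a::field fps set \<Rightarrow> 'a fps set" where
  "blowup R = (\<Union>n. colon (ideal_pow R (max_ideal R) n) (ideal_pow R (max_ideal R) n))"

definition mult_e :: "'a::field fps set \<Rightarrow> nat" where
  "mult_e R = (LEAST s. s \<in> val_set R \<and> 0 < s)"

definition wmin :: "nat set \<Rightarrow> nat \<Rightarrow> nat \<Rightarrow> nat" where
  "wmin A e j = (LEAST s. s \<in> A \<and> s mod e = j mod e)"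

definition w_idx :: "'a::field fps set \<Rightarrow> nat \<Rightarrow> nat" where
  "w_idx R j = wmin (val_set R) (mult_e R) j"

definition w'_idx :: "'a::field fps set \<Rightarrow> nat \<Rightarrow> nat" where
  "w'_idx R j = wmin (val_set (blowup R)) (mult_e R) j"

definition b_idx :: "'a::field fps set \<Rightarrow> nat \<Rightarrow> nat" where
  "b_idx R j = (GREATEST i. w_idx R j \<in> val_set (ideal_pow R (max_ideal R) i))"

text \<open>a_j defined by w'_j = w_j - a_j e.\<close>
definition a_idx :: "'a::field fps set \<Rightarrow> nat \<Rightarrow> int" where
  "a_idx R j = (int (w_idx R j) - int (w'_idx R j)) div int (mult_e R)"

end

theory Submission
  imports Defs
begin

unbundle fps_syntax

definition ordge :: "nat \<Rightarrow> 'a::field fps \<Rightarrow> bool" where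
  "ordge k y \<longleftrightarrow> (\<forall>i<k. y $ i = 0)"

declare ideal_pow.simps(2)[simp del]

lemma ordge_iff: "ordge k y \<longleftrightarrow> y = 0 \<or> k \<le> subdegree y"
  unfolding ordge_def
  by (meson fps_zero_nth leD leI nth_subdegree_nonzero order.strict_trans1
    subdegree_leI)

lemma ordge_mult: "ordge a f \<Longrightarrow> ordge b g \<Longrightarrow> ordge (a + b) (f * g)"
  unfolding ordge_def fps_mult_nth
  apply (auto intro!: sum.neutral)
  by (metis add.commute add_mono leD leI le_add_diff_inverse2)

lemma ordge_add: "ordge k f \<Longrightarrow> ordge k g \<Longrightarrow> ordge k (f + g)"
  unfolding ordge_def by simp

lemma ordge_sum: "(\<And>l. l < n \<Longrightarrow> ordge k (F l)) \<Longrightarrow> ordge k (\<Sum>l<n. F l)"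
  unfolding ordge_def fps_sum_nth by auto

lemma ordge_mono: "ordge k f \<Longrightarrow> k' \<le> k \<Longrightarrow> ordge k' f"
  unfolding ordge_def by auto

lemma ip_intro:
  fixes n :: nat
  assumes "y = (\<Sum>l<n. f l * g l)" "\<forall>l<n. f l \<in> A \<and> g l \<in> B"
  shows "y \<in> ideal_prod A B"
  unfolding ideal_prod_def using assms by auto

lemma ip_elim:
  assumes "y \<in> ideal_prod A B"
  obtains n :: nat and f g where "y = (\<Sum>l<n. f l * g l)" "\<forall>l<n. f l \<in> A \<and> g l \<in> B"
  using assms unfolding ideal_prod_def by auto

lemma ip_zero: "0 \<in> ideal_prod A B"
  unfolding ideal_prod_def by (rule CollectI, rule exI[of _ 0]) auto

lemma ip_mem: "a \<in> A \<Longrightarrow> b \<in> B \<Longrightarrow> a * b \<in> ideal_prod A B"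
  unfolding ideal_prod_def
  by (rule CollectI, rule exI[of _ 1], rule exI[of _ "\<lambda>_. a"], rule exI[of _ "\<lambda>_. b"]) auto

lemma ip_snoc:
  assumes "y \<in> ideal_prod A B" "a \<in> A" "b \<in> B"
  shows "y + a * b \<in> ideal_prod A B"
proof -
  obtain n :: nat and f g where y: "y = (\<Sum>l<n. f l * g l)" "\<forall>l<n. f l \<in> A \<and> g l \<in> B"
    using assms(1) by (rule ip_elim)
  have "y + a * b = (\<Sum>l<Suc n. (f(n:=a)) l * (g(n:=b)) l)"
    using y(1) by (simp add: sum.lessThan_Suc)
  moreover have "\<forall>l<Suc n. (f(n:=a)) l \<in> A \<and> (g(n:=b)) l \<in> B"
    using y(2) assms by (auto simp: less_Suc_eq)
  ultimately show ?thesis by (rule ip_intro)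
qed

lemma ip_add:
  assumes "x \<in> ideal_prod A B" "y \<in> ideal_prod A B"
  shows "x + y \<in> ideal_prod A B"
proof -
  obtain n :: nat and f g where y: "y = (\<Sum>l<n. f l * g l)" "\<forall>l<n. f l \<in> A \<and> g l \<in> B"
    using assms(2) by (rule ip_elim)
  have "\<forall>l<n. f l \<in> A \<and> g l \<in> B \<Longrightarrow> x + (\<Sum>l<n. f l * g l) \<in> ideal_prod A B" for n
  proof (induction n)
    case 0 then show ?case using assms(1) by simp
  next
    case (Suc n)
    then have "x + (\<Sum>l<n. f l * g l) + f n * g n \<in> ideal_prod A B"
      by (intro ip_snoc) auto
    then show ?case by (simp add: sum.lessThan_Suc add.assoc)
  qed
  then show ?thesis using y by blast
qed

lemma ip_subset:
  assumes "is_subring_fps R" "A \<subseteq> R" "B \<subseteq> R"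
  shows "ideal_prod A B \<subseteq> R"
proof
  fix y assume "y \<in> ideal_prod A B"
  then obtain n :: nat and f g where y: "y = (\<Sum>l<n. f l * g l)" "\<forall>l<n. f l \<in> A \<and> g l \<in> B"
    by (rule ip_elim)
  have "\<forall>l<n. f l \<in> A \<and> g l \<in> B \<Longrightarrow> (\<Sum>l<n. f l * g l) \<in> R" for n
  proof (induction n)
    case 0 then show ?case using assms(1) unfolding is_subring_fps_def by simp
  next
    case (Suc n)
    then have "(\<Sum>l<n. f l * g l) \<in> R" "f n \<in> R" "g n \<in> R" using assms by auto
    then show ?case using assms(1) unfolding is_subring_fps_def
      by (auto simp: sum.lessThan_Suc)
  qed
  then show "y \<in> R" using y by blast
qed

lemma ip_multB:
  assumes "y \<in> ideal_prod A B" "\<And>b. b \<in> B \<Longrightarrow> r * b \<in> B"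
  shows "r * y \<in> ideal_prod A B"
proof -
  obtain n :: nat and f g where y: "y = (\<Sum>l<n. f l * g l)" "\<forall>l<n. f l \<in> A \<and> g l \<in> B"
    using assms(1) by (rule ip_elim)
  have "r * y = (\<Sum>l<n. f l * (r * g l))"
    using y(1) by (simp add: sum_distrib_left mult.left_commute)
  moreover have "\<forall>l<n. f l \<in> A \<and> r * g l \<in> B" using y(2) assms(2) by auto
  ultimately show ?thesis by (rule ip_intro)
qed


locale bsetup =
  fixes R :: "'a::field fps set"
  assumes sub: "is_subring_fps R"
    and cst: "contains_constants R"
    and loc: "is_local R"
    and cond: "conductor R \<noteq> {0}"
begin

abbreviation "m \<equiv> max_ideal R"
abbreviation "P \<equiv> ideal_pow R m"

lemma P_Suc: "P (Suc n) = ideal_prod m (P n)" by (rule ideal_pow.simps(2))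

lemma R0: "0 \<in> R" and R1: "1 \<in> R"
  and Radd: "x \<in> R \<Longrightarrow> y \<in> R \<Longrightarrow> x + y \<in> R"
  and Rdiff: "x \<in> R \<Longrightarrow> y \<in> R \<Longrightarrow> x - y \<in> R"
  and Rmult: "x \<in> R \<Longrightarrow> y \<in> R \<Longrightarrow> x * y \<in> R"
  using sub unfolding is_subring_fps_def by auto

lemma Rconst: "fps_const c \<in> R"
  using cst unfolding contains_constants_def by auto

lemma m_sub: "m \<subseteq> R"
  unfolding max_ideal_def by auto

lemma m_ideal: "x \<in> m \<Longrightarrow> y \<in> m \<Longrightarrow> x + y \<in> m" "x \<in> m \<Longrightarrow> r \<in> R \<Longrightarrow> r * x \<in> m"
  using loc unfolding is_local_def is_ideal_of_def by auto

lemma m_char: "m = {r \<in> R. r $ 0 = 0}"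
proof
  show "{r \<in> R. r $ 0 = 0} \<subseteq> m"
  proof
    fix r assume r: "r \<in> {r \<in> R. r $ 0 = 0}"
    have "r * s \<noteq> 1" for s
    proof
      assume "r * s = 1"
      then have "(r * s) $ 0 = 1" by simp
      then show False using r by simp
    qed
    then show "r \<in> m" using r unfolding max_ideal_def by auto
  qed
next
  show "m \<subseteq> {r \<in> R. r $ 0 = 0}"
  proof
    fix r assume r: "r \<in> m"
    then have rR: "r \<in> R" using m_sub by auto
    show "r \<in> {r \<in> R. r $ 0 = 0}"
    proof (rule ccontr)
      assume "r \<notin> {r \<in> R. r $ 0 = 0}"
      then have a: "r $ 0 \<noteq> 0" using rR by auto
      define z where "z = r - fps_const (r $ 0)"
      have zR: "z \<in> R" unfolding z_def using rR Rconst Rdiff by auto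
      have "z $ 0 = 0" unfolding z_def by simp
      have zm: "z \<in> m"
      proof -
        have "z * s \<noteq> 1" for s
        proof
          assume "z * s = 1"
          then have "(z * s) $ 0 = 1" by simp
          then show False using \<open>z $ 0 = 0\<close> by simp
        qed
        then show ?thesis using zR unfolding max_ideal_def by auto
      qed
      have "fps_const (-1) * z \<in> m" using m_ideal(2)[OF zm Rconst] .
      then have "r + fps_const (-1) * z \<in> m" by (rule m_ideal(1)[OF r])
      moreover have "r + fps_const (-1) * z = fps_const (r $ 0)"
      proof -
        have "fps_const (-1) = (-1 :: 'a fps)" by (simp only: fps_const_neg[symmetric] fps_const_1_eq_1)
        then show ?thesis unfolding z_def by simp
      qed
      ultimately have cm: "fps_const (r $ 0) \<in> m" by metis
      have "fps_const (r $ 0) * fps_const (inverse (r $ 0)) = 1"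
        using a by (simp add: fps_const_mult[symmetric])
      then show False using cm Rconst unfolding max_ideal_def by blast
    qed
  qed
qed

lemma P_ideal:
  "P n \<subseteq> R \<and> 0 \<in> P n \<and> (\<forall>x\<in>P n. \<forall>y\<in>P n. x + y \<in> P n) \<and> (\<forall>x\<in>P n. \<forall>r\<in>R. r * x \<in> P n)"
proof (induction n)
  case 0
  then show ?case using R0 Radd Rmult by simp
next
  case (Suc n)
  have "P (Suc n) = ideal_prod m (P n)" by (rule P_Suc)
  moreover have "ideal_prod m (P n) \<subseteq> R" using Suc m_sub by (intro ip_subset[OF sub]) auto
  moreover have "0 \<in> ideal_prod m (P n)" by (rule ip_zero)
  moreover have "\<forall>x\<in>ideal_prod m (P n). \<forall>y\<in>ideal_prod m (P n). x + y \<in> ideal_prod m (P n)"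
    using ip_add by blast
  moreover have "\<forall>x\<in>ideal_prod m (P n). \<forall>r\<in>R. r * x \<in> ideal_prod m (P n)"
    using Suc by (auto intro: ip_multB)
  ultimately show ?case by simp
qed

lemma P_sub: "P n \<subseteq> R" and P0: "0 \<in> P n"
  and P_add: "x \<in> P n \<Longrightarrow> y \<in> P n \<Longrightarrow> x + y \<in> P n"
  and P_mult: "x \<in> P n \<Longrightarrow> r \<in> R \<Longrightarrow> r * x \<in> P n"
  using P_ideal[of n] by auto

lemma P_diff: "x \<in> P n \<Longrightarrow> y \<in> P n \<Longrightarrow> x - y \<in> P n"
proof -
  assume "x \<in> P n" "y \<in> P n"
  moreover have "fps_const (-1) * y \<in> P n" using P_mult \<open>y \<in> P n\<close> Rconst by blast
  ultimately have "x + fps_const (-1) * y \<in> P n" using P_add by blast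
  moreover have "x + fps_const (-1) * y = x - y"
  proof -
    have "fps_const (-1) = (-1 :: 'a fps)" by (simp only: fps_const_neg[symmetric] fps_const_1_eq_1)
    then show ?thesis by simp
  qed
  ultimately show ?thesis by simp
qed

lemma P_Suc_mem: "a \<in> m \<Longrightarrow> y \<in> P n \<Longrightarrow> a * y \<in> P (Suc n)"
  by (simp add: ip_mem P_Suc)

lemma P_prod: "f \<in> P a \<Longrightarrow> y \<in> P c \<Longrightarrow> f * y \<in> P (a + c)"
proof (induction a arbitrary: f)
  case 0
  then show ?case using P_mult[of y c f] by (simp add: mult.commute)
next
  case (Suc a)
  obtain n :: nat and F G where f: "f = (\<Sum>l<n. F l * G l)" "\<forall>l<n. F l \<in> m \<and> G l \<in> P a"
    using Suc.prems(1) by (auto simp: P_Suc elim: ip_elim)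
  have "f * y = (\<Sum>l<n. F l * (G l * y))"
    using f(1) by (simp add: sum_distrib_right mult.assoc)
  moreover have "\<forall>l<n. F l \<in> m \<and> G l * y \<in> P (a + c)" using f(2) Suc.IH Suc.prems(2) by blast
  ultimately have "f * y \<in> ideal_prod m (P (a + c))" by (rule ip_intro)
  then show ?case by (simp add: P_Suc)
qed


definition zc where "zc = (SOME z. z \<in> conductor R \<and> z \<noteq> 0)"
definition c where "c = subdegree zc + 1"

lemma zc: "zc \<in> R" "zc \<noteq> 0" "\<And>y. zc * y \<in> R"
proof -
  have "0 \<in> conductor R" unfolding conductor_def using R0 by simp
  then have "\<exists>z. z \<in> conductor R \<and> z \<noteq> 0" using cond by blast
  then have "zc \<in> conductor R \<and> zc \<noteq> 0" unfolding zc_def by (rule someI_ex)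
  then show "zc \<in> R" "zc \<noteq> 0" "\<And>y. zc * y \<in> R" unfolding conductor_def by auto
qed

lemma c_pos: "1 \<le> c" unfolding c_def by simp

lemma cond_R: assumes "ordge c g" shows "g \<in> R"
proof (cases "g = 0")
  case True then show ?thesis using R0 by simp
next
  case False
  then have "c \<le> subdegree g" using assms ordge_iff by blast
  then have "subdegree zc \<le> subdegree g" unfolding c_def by simp
  then have "zc dvd g" using fps_dvd_iff zc(2) False by blast
  then obtain q where "g = zc * q" by (auto elim: dvdE)
  then show ?thesis using zc(3) by simp
qed

lemma cond_m: assumes "ordge c g" shows "g \<in> m"
proof -
  have "g $ 0 = 0" using assms c_pos unfolding ordge_def by auto
  then show ?thesis using cond_R[OF assms] m_char by auto
qed

definition e where "e = mult_e R"

lemma e_props: "e \<in> val_set R" "0 < e" "\<And>s. s \<in> val_set R \<Longrightarrow> 0 < s \<Longrightarrow> e \<le> s"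
proof -
  have "ordge c (fps_X ^ c :: 'a fps)" unfolding ordge_def by simp
  then have "fps_X ^ c \<in> R" by (rule cond_R)
  moreover have "(fps_X ^ c :: 'a fps) \<noteq> 0" by simp
  ultimately have "c \<in> val_set R" unfolding val_set_def
    by (metis DiffI fps_X_power_subdegree image_eqI singletonD)
  then have ex: "\<exists>s. s \<in> val_set R \<and> 0 < s" using c_pos by auto
  show "e \<in> val_set R" "0 < e" using LeastI_ex[OF ex] unfolding e_def mult_e_def by auto
  show "\<And>s. s \<in> val_set R \<Longrightarrow> 0 < s \<Longrightarrow> e \<le> s" unfolding e_def mult_e_def
    by (simp add: Least_le)
qed

lemma m_ordge: assumes "y \<in> m" shows "ordge e y"
proof (cases "y = 0")
  case True then show ?thesis unfolding ordge_def by simp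
next
  case False
  have y: "y \<in> R" "y $ 0 = 0" using assms m_char by auto
  then have "subdegree y \<in> val_set R" using False unfolding val_set_def by auto
  moreover have "0 < subdegree y" using y False subdegree_eq_0_iff by auto
  ultimately have "e \<le> subdegree y" using e_props(3) by auto
  then show ?thesis using ordge_iff by blast
qed

lemma P_ordge: "y \<in> P n \<Longrightarrow> ordge (n * e) y"
proof (induction n arbitrary: y)
  case 0 then show ?case unfolding ordge_def by simp
next
  case (Suc n)
  from Suc.prems have "y \<in> ideal_prod m (P n)" by (simp add: P_Suc)
  then obtain k :: nat and F G where y: "y = (\<Sum>l<k. F l * G l)" "\<forall>l<k. F l \<in> m \<and> G l \<in> P n"
    by (rule ip_elim)
  have "ordge (e + n * e) (F l * G l)" if "l < k" for l
    using y(2) that m_ordge Suc.IH by (intro ordge_mult) auto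
  then show ?case unfolding y(1) by (intro ordge_sum) simp
qed

definition xx where "xx = (SOME x. x \<in> R \<and> x \<noteq> 0 \<and> subdegree x = e)"

lemma xx: "xx \<in> R" "xx \<noteq> 0" "subdegree xx = e"
proof -
  have "\<exists>x. x \<in> R \<and> x \<noteq> 0 \<and> subdegree x = e" using e_props(1) unfolding val_set_def by auto
  then have "xx \<in> R \<and> xx \<noteq> 0 \<and> subdegree xx = e" unfolding xx_def by (rule someI_ex)
  then show "xx \<in> R" "xx \<noteq> 0" "subdegree xx = e" by auto
qed

lemma xx_m: "xx \<in> m"
proof -
  have "xx $ 0 = 0" using xx(3) e_props(2) by (intro nth_less_subdegree_zero) simp
  then show ?thesis using xx(1) m_char by auto
qed

lemma xpow: "xx ^ k \<in> P k"
proof (induction k)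
  case 0 then show ?case using R1 by simp
next
  case (Suc k)
  then show ?case using P_Suc_mem[OF xx_m Suc] by simp
qed

lemma xpow_nz: "xx ^ k \<noteq> 0" using xx(2) by simp

lemma xpow_sub: "subdegree (xx ^ k) = k * e" using xx(3) by simp

lemma div_x: assumes "ordge (k * e) y" shows "\<exists>w. y = xx ^ k * w"
proof (cases "y = 0")
  case True then show ?thesis by (intro exI[of _ 0]) simp
next
  case False
  then have "k * e \<le> subdegree y" using assms ordge_iff by blast
  then have "subdegree (xx ^ k) \<le> subdegree y" by (simp only: xpow_sub)
  then have "xx ^ k dvd y" using fps_dvd_iff[OF xpow_nz False] by blast
  then show ?thesis by (auto elim: dvdE)
qed

lemma claimA: assumes "ordge (k * e + c) g" shows "g \<in> P (Suc k)"
proof -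
  have "ordge (k * e) g" using assms by (rule ordge_mono) simp
  then obtain w where w: "g = xx ^ k * w" using div_x by blast
  have "ordge c w"
  proof (cases "w = 0")
    case True then show ?thesis unfolding ordge_def by simp
  next
    case False
    then have "g \<noteq> 0" using w xpow_nz by simp
    then have "k * e + c \<le> subdegree g" using assms ordge_iff by blast
    also have "subdegree g = k * e + subdegree w" using w False xpow_nz xpow_sub by simp
    finally have "c \<le> subdegree w" by simp
    then show ?thesis using ordge_iff by blast
  qed
  then have "w \<in> m" by (rule cond_m)
  then have "w * xx ^ k \<in> P (Suc k)" using P_Suc_mem xpow by blast
  then show ?thesis using w by (simp add: mult.commute)
qed

definition T where "T N = {z. xx ^ N * z \<in> P (Suc N)}"

lemma T_add: "a \<in> T N \<Longrightarrow> b \<in> T N \<Longrightarrow> a + b \<in> T N"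
  unfolding T_def using P_add by (simp add: distrib_left)

lemma T_diff: "a \<in> T N \<Longrightarrow> b \<in> T N \<Longrightarrow> a - b \<in> T N"
  unfolding T_def using P_diff by (simp add: right_diff_distrib)

lemma T_smult: "a \<in> T N \<Longrightarrow> fps_const l * a \<in> T N"
  unfolding T_def using P_mult Rconst by (simp add: mult.left_commute)

lemma T_mono: "T N \<subseteq> T (Suc N)"
proof
  fix z assume "z \<in> T N"
  then have "xx * (xx ^ N * z) \<in> P (Suc (Suc N))" unfolding T_def mem_Collect_eq by (rule P_Suc_mem[OF xx_m])
  then show "z \<in> T (Suc N)" unfolding T_def mem_Collect_eq by (metis mult.assoc power_Suc)
qed

lemma T_cond: assumes "ordge c g" shows "g \<in> T N"
proof -
  have "ordge (N * e + c) (xx ^ N * g)" using P_ordge[OF xpow] assms by (rule ordge_mult)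
  then show ?thesis unfolding T_def mem_Collect_eq by (rule claimA)
qed

definition W where "W N = subdegree ` (T N - {0}) \<inter> {..<c}"

lemma W_mono: "W N \<subseteq> W (Suc N)"
  unfolding W_def using T_mono by blast

lemma stab: "\<exists>N. W (Suc N) \<subseteq> W N"
proof (rule ccontr)
  assume "\<not> ?thesis"
  then have ps: "W N \<subset> W (Suc N)" for N using W_mono by blast
  have fin: "finite (W N)" for N unfolding W_def by auto
  have "N \<le> card (W N)" for N
  proof (induction N)
    case 0 then show ?case by simp
  next
    case (Suc N)
    have "card (W N) < card (W (Suc N))" using psubset_card_mono[OF fin ps] .
    then show ?case using Suc by simp
  qed
  moreover have "card (W N) \<le> c" for N
  proof -
    have "card (W N) \<le> card {..<c}" unfolding W_def by (intro card_mono) auto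
    then show ?thesis by simp
  qed
  ultimately show False using le_trans not_less_eq_eq by blast
qed

lemma reduce: assumes "W (Suc N) \<subseteq> W N" shows "T (Suc N) \<subseteq> T N"
proof -
  have "\<forall>w\<in>T (Suc N). ordge (c - k) w \<longrightarrow> w \<in> T N" for k
  proof (induction k)
    case 0
    then show ?case using T_cond by simp
  next
    case (Suc k)
    show ?case
    proof (intro ballI impI)
      fix w assume w: "w \<in> T (Suc N)" "ordge (c - Suc k) w"
      show "w \<in> T N"
      proof (cases "c \<le> k")
        case True
        then have "c - Suc k = c - k" by simp
        then show ?thesis using Suc w by simp
      next
        case False
        define s where "s = c - Suc k"
        have cs: "c - k = Suc s" "s < c" using False unfolding s_def by auto
        show ?thesis
        proof (cases "w $ s = 0")
          case True
          then have "ordge (Suc s) w" using w(2) unfolding ordge_def s_def less_Suc_eq by auto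
          then show ?thesis using Suc w cs by simp
        next
          case False
          then have wnz: "w \<noteq> 0" by auto
          have "s \<le> subdegree w" using w(2) wnz ordge_iff s_def by blast
          moreover have "subdegree w \<le> s" using False by (rule subdegree_leI)
          ultimately have sw: "subdegree w = s" by simp
          then have "s \<in> W (Suc N)" unfolding W_def using w(1) wnz cs by auto
          then have "s \<in> W N" using assms by blast
          then obtain u where u: "u \<in> T N" "u \<noteq> 0" "subdegree u = s" unfolding W_def by auto
          have us: "u $ s \<noteq> 0" using u by auto
          define lam where "lam = w $ s / u $ s"
          define w' where "w' = w - fps_const lam * u"
          have "u \<in> T (Suc N)" using u(1) T_mono by blast
          then have w'T: "w' \<in> T (Suc N)" unfolding w'_def using w(1) T_smult T_diff by blast
          have "ordge (Suc s) w'"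
            unfolding ordge_def
          proof (intro allI impI)
            fix i assume "i < Suc s"
            then consider "i < s" | "i = s" by linarith
            then show "w' $ i = 0"
            proof cases
              case 1
              then have "w $ i = 0" "u $ i = 0" using sw u(3) by (auto intro!: nth_less_subdegree_zero)
              then show ?thesis unfolding w'_def by simp
            next
              case 2
              then show ?thesis unfolding w'_def lam_def using us by simp
            qed
          qed
          then have "w' \<in> T N" using Suc w'T cs by simp
          moreover have "fps_const lam * u \<in> T N" using u(1) T_smult by blast
          ultimately have "w' + fps_const lam * u \<in> T N" by (rule T_add)
          then show ?thesis unfolding w'_def by simp
        qed
      qed
    qed
  qed
  from this[of c] show ?thesis unfolding ordge_def by auto
qed

lemma step: "\<exists>n0. \<forall>n\<ge>n0. \<forall>y\<in>P (Suc n). \<exists>z\<in>P n. y = xx * z"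
proof -
  obtain N where N: "W (Suc N) \<subseteq> W N" using stab by blast
  then have TT: "T (Suc N) \<subseteq> T N" by (rule reduce)
  have "\<forall>y\<in>P (Suc n). \<exists>z\<in>P n. y = xx * z" if "Suc N \<le> n" for n
    using that
  proof (induction n rule: dec_induct)
    case base
    show ?case
    proof
      fix y assume y: "y \<in> P (Suc (Suc N))"
      have "ordge (Suc (Suc N) * e) y" using P_ordge[OF y] .
      then have "ordge (Suc N * e) y" by (rule ordge_mono) simp
      then obtain z where z: "y = xx ^ Suc N * z" using div_x by blast
      then have "z \<in> T (Suc N)" unfolding T_def using y by simp
      then have "z \<in> T N" using TT by blast
      then have "xx ^ N * z \<in> P (Suc N)" unfolding T_def by simp
      moreover have "y = xx * (xx ^ N * z)" using z by (simp add: mult.assoc)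
      ultimately show "\<exists>z\<in>P (Suc N). y = xx * z" by blast
    qed
  next
    case (step n)
    show ?case
    proof
      fix y assume "y \<in> P (Suc (Suc n))"
      then have "y \<in> ideal_prod m (P (Suc n))" by (simp add: P_Suc)
      then obtain k :: nat and F G where y: "y = (\<Sum>l<k. F l * G l)" "\<forall>l<k. F l \<in> m \<and> G l \<in> P (Suc n)"
        by (rule ip_elim)
      define H where "H l = (SOME h. h \<in> P n \<and> G l = xx * h)" for l
      have H: "H l \<in> P n \<and> G l = xx * H l" if "l < k" for l
      proof -
        have "\<exists>h. h \<in> P n \<and> G l = xx * h" using step.IH y(2) that by blast
        then show ?thesis unfolding H_def by (rule someI_ex)
      qed
      have "y = xx * (\<Sum>l<k. F l * H l)"
        unfolding y(1) sum_distrib_left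
        by (rule sum.cong) (auto simp: H mult.left_commute)
      moreover have "(\<Sum>l<k. F l * H l) \<in> ideal_prod m (P n)"
        by (rule ip_intro[OF refl]) (use y(2) H in auto)
      ultimately show "\<exists>z\<in>P (Suc n). y = xx * z" by (auto simp: P_Suc)
    qed
  qed
  then show ?thesis by blast
qed

lemma powstep: "\<exists>n0. \<forall>k. \<forall>y\<in>P (n0 + k). \<exists>z\<in>P n0. y = xx ^ k * z"
proof -
  obtain n0 where n0: "\<forall>n\<ge>n0. \<forall>y\<in>P (Suc n). \<exists>z\<in>P n. y = xx * z" using step by blast
  have "\<forall>y\<in>P (n0 + k). \<exists>z\<in>P n0. y = xx ^ k * z" for k
  proof (induction k)
    case 0 then show ?case by auto
  next
    case (Suc k)
    show ?case
    proof
      fix y assume "y \<in> P (n0 + Suc k)"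
      then have "y \<in> P (Suc (n0 + k))" by simp
      then have "\<exists>z1\<in>P (n0 + k). y = xx * z1" using n0 le_add1 by blast
      then obtain z1 where z1: "z1 \<in> P (n0 + k)" "y = xx * z1" by blast
      then obtain z where "z \<in> P n0" "z1 = xx ^ k * z" using Suc by blast
      then show "\<exists>z\<in>P n0. y = xx ^ Suc k * z" using z1 by (auto simp: mult.assoc)
    qed
  qed
  then show ?thesis by blast
qed

lemma key:
  assumes "f \<in> P b" "f \<noteq> 0"
  shows "\<exists>g\<in>blowup R. g \<noteq> 0 \<and> subdegree f = b * e + subdegree g"
proof -
  obtain n0 where n0: "\<forall>k. \<forall>y\<in>P (n0 + k). \<exists>z\<in>P n0. y = xx ^ k * z" using powstep by blast
  obtain g where g: "f = xx ^ b * g" using div_x P_ordge[OF assms(1)] by blast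
  have gnz: "g \<noteq> 0" using g assms(2) by auto
  have sd: "subdegree f = b * e + subdegree g" using g gnz xpow_nz xpow_sub by simp
  have "g \<in> colon (P n0) (P n0)"
    unfolding colon_def
  proof (intro CollectI ballI)
    fix y assume y: "y \<in> P n0"
    have "f * y \<in> P (n0 + b)" using P_prod[OF assms(1) y] by (simp add: add.commute)
    then obtain z where z: "z \<in> P n0" "f * y = xx ^ b * z" using n0 by blast
    then have "xx ^ b * (g * y) = xx ^ b * z" using g by (simp add: mult.assoc)
    then have "g * y = z" using mult_left_cancel[OF xpow_nz] by blast
    then show "g * y \<in> P n0" using z by simp
  qed
  then have "g \<in> blowup R" unfolding blowup_def by blast
  then show ?thesis using gnz sd by blast
qed

end

theorem mainTheorem7:
  fixes R :: "'a::field fps set"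
  assumes "is_subring_fps R"
    and "contains_constants R"
    and "is_local R"
    and "residue_field_is_k R"
    and "madic_complete R"
    and "conductor R \<noteq> {0}"
    and "j < mult_e R"
  shows "int (b_idx R j) \<le> a_idx R j"
proof -
  interpret bsetup R using assms by unfold_locales auto
  have ee: "mult_e R = e" unfolding e_def by simp
  note jl = assms(7)[unfolded ee]
  define s0 where "s0 = c * e + j"
  have "c * 1 \<le> c * e" using e_props(2) by (intro mult_le_mono2) simp
  then have "c \<le> s0" unfolding s0_def by (metis le_add1 le_trans mult_1_right)
  then have "ordge c (fps_X ^ s0 :: 'a fps)" unfolding ordge_def by auto
  hence "fps_X ^ s0 \<in> R" by (rule cond_R)
  hence "s0 \<in> val_set R" unfolding val_set_def
    by (metis DiffI fps_X_power_subdegree image_eqI singletonD power_eq_0_iff fps_X_neq_zero)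
  moreover have "s0 mod e = j mod e" unfolding s0_def by simp
  ultimately have exw: "\<exists>s. s \<in> val_set R \<and> s mod e = j mod e" by blast
  define w where "w = w_idx R j"
  have w: "w \<in> val_set R" "w mod e = j mod e"
    using LeastI_ex[OF exw] unfolding w_def w_idx_def wmin_def ee by auto
  define b where "b = b_idx R j"
  have bnd: "i \<le> w" if wi: "w \<in> val_set (P i)" for i
  proof -
    obtain f where f1: "f \<in> P i - {0}" and f2: "w = subdegree f" using wi unfolding val_set_def by blast
    then have f: "f \<in> P i" "f \<noteq> 0" "subdegree f = w" by auto
    have "i * e \<le> w" using P_ordge[OF f(1)] f ordge_iff by metis
    moreover have "i * 1 \<le> i * e" using e_props(2) by (intro mult_le_mono2) simp
    ultimately show ?thesis by linarith
  qed
  have "w \<in> val_set (P b)" unfolding b_def b_idx_def w_def[symmetric]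
    by (rule GreatestI_nat[where k = 0 and b = w]) (use w(1) bnd in auto)
  then obtain f where f1: "f \<in> P b - {0}" and f2: "w = subdegree f" unfolding val_set_def by blast
  then have f: "f \<in> P b" "f \<noteq> 0" "subdegree f = w" by auto
  obtain g where g: "g \<in> blowup R" "g \<noteq> 0" "w = b * e + subdegree g" using key[OF f(1,2)] f(3) by auto
  have "subdegree g \<in> val_set (blowup R)" using g unfolding val_set_def by auto
  moreover have "subdegree g mod e = j mod e" using w(2) g(3) by (metis mod_mult_self3)
  ultimately have "w'_idx R j \<le> subdegree g"
    unfolding w'_idx_def wmin_def ee by (intro Least_le) simp
  then have "int b * int e \<le> int w - int (w'_idx R j)" using g(3) by simp
  then have "(int b * int e) div int e \<le> (int w - int (w'_idx R j)) div int e"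
    using e_props(2) by (intro zdiv_mono1) auto
  then show ?thesis unfolding a_idx_def b_def[symmetric] w_def[symmetric] ee using e_props(2) by simp
qed

end
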